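(* Let $M$ be a sharp toric monoid and let $N\subseteq M$ be a face. Then the following conditions are equivalent: (a) $N$ splits off, i.e. there is a face $K\subseteq M$ such that the natural map $N\oplus K\to M$ is an isomorphism; (b) the ideal $(N^+)=N^++M$ of $M$ is prime and $\operatorname{ht}((N^+))\ge \operatorname{rk}(N)$; (c) the ideal $(N^+)$ is prime and the face $K=M\setminus (N^+)$ satisfies $\operatorname{rk}(K)+\operatorname{rk}(N)\le \operatorname{rk}(M)$.
   Context: Monoids are commutative. For a monoid $M$: $M^\times$ is its group of units, $M^{gp}$ its Grothendieck group, $\operatorname{rk}(M)=\dim_{\mathbb Q}(M^{gp}\otimes\mathbb Q)$. $M$ is sharp if $M^\times=\{0\}$. A toric monoid is a fine (finitely generated, integral) saturated monoid whose Grothendieck group is torsion free. For a face $N$, $N^+=N\setminus N^\times$. An ideal of $M$ is a subset $I$ with $I+M\subseteq I$; it is prime if $M\setminus I$ is a submonoid (then $M\setminus I$ is a face). For a toric monoid and a prime ideal $\mathfrak p$ with face $F=M\setminus\mathfrak p$, the height is $\operatorname{ht}(\mathfrak p)=\operatorname{rk}(M)-\operatorname{rk}(F)$. *)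

theory Defs
  imports Main
begin

text \<open>A (commutative, integral) monoid is represented as a submonoid M of an
abelian group 'a; its Grothendieck group is then the subgroup generated by M.\<close>

definition nmul :: "nat \<Rightarrow> 'a::ab_group_add \<Rightarrow> 'a" where
  "nmul n x = (((+) x) ^^ n) 0"

definition zmul :: "int \<Rightarrow> 'a::ab_group_add \<Rightarrow> 'a" where
  "zmul k x = (if k \<ge> 0 then nmul (nat k) x else - nmul (nat (- k)) x)"

definition submonoid :: "'a::ab_group_add set \<Rightarrow> bool" where
  "submonoid M \<longleftrightarrow> 0 \<in> M \<and> (\<forall>x\<in>M. \<forall>y\<in>M. x + y \<in> M)"

definition units :: "'a::ab_group_add set \<Rightarrow> 'a set" where
  "units M = {x \<in> M. \<exists>y\<in>M. x + y = 0}"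

definition sharp :: "'a::ab_group_add set \<Rightarrow> bool" where
  "sharp M \<longleftrightarrow> units M = {0}"

definition gp :: "'a::ab_group_add set \<Rightarrow> 'a set" where
  "gp M = {a - b | a b. a \<in> M \<and> b \<in> M}"

definition fin_gen :: "'a::ab_group_add set \<Rightarrow> bool" where
  "fin_gen M \<longleftrightarrow> (\<exists>G. finite G \<and> G \<subseteq> M \<and>
      M = {\<Sum>g\<in>G. nmul (c g) g | c. True})"

definition saturated :: "'a::ab_group_add set \<Rightarrow> bool" where
  "saturated M \<longleftrightarrow> (\<forall>x\<in>gp M. \<forall>n>0. nmul n x \<in> M \<longrightarrow> x \<in> M)"

definition torsion_free :: "'a::ab_group_add set \<Rightarrow> bool" where
  "torsion_free G \<longleftrightarrow> (\<forall>x\<in>G. \<forall>n>0. nmul n x = 0 \<longrightarrow> x = 0)"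

text \<open>fine (f.g. + integral; integrality is automatic for submonoids of groups),
saturated, torsion-free Grothendieck group\<close>
definition toric :: "'a::ab_group_add set \<Rightarrow> bool" where
  "toric M \<longleftrightarrow> submonoid M \<and> fin_gen M \<and> saturated M \<and> torsion_free (gp M)"

text \<open>Z-linear independence; rank = dim_Q (M^gp \<otimes> Q) = maximal size of a
Z-linearly independent subset of M^gp\<close>
definition zindep :: "'a::ab_group_add set \<Rightarrow> bool" where
  "zindep S \<longleftrightarrow> finite S \<and>
     (\<forall>c::'a \<Rightarrow> int. (\<Sum>s\<in>S. zmul (c s) s) = 0 \<longrightarrow> (\<forall>s\<in>S. c s = 0))"

definition rk :: "'a::ab_group_add set \<Rightarrow> nat" where
  "rk M = Max {card S | S. S \<subseteq> gp M \<and> zindep S}"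

definition face :: "'a::ab_group_add set \<Rightarrow> 'a set \<Rightarrow> bool" where
  "face F M \<longleftrightarrow> submonoid F \<and> F \<subseteq> M \<and>
     (\<forall>x\<in>M. \<forall>y\<in>M. x + y \<in> F \<longrightarrow> x \<in> F \<and> y \<in> F)"

definition ideal :: "'a::ab_group_add set \<Rightarrow> 'a set \<Rightarrow> bool" where
  "ideal I M \<longleftrightarrow> I \<subseteq> M \<and> (\<forall>x\<in>I. \<forall>m\<in>M. x + m \<in> I)"

definition prime_ideal :: "'a::ab_group_add set \<Rightarrow> 'a set \<Rightarrow> bool" where
  "prime_ideal I M \<longleftrightarrow> ideal I M \<and> submonoid (M - I)"

definition plus_part :: "'a::ab_group_add set \<Rightarrow> 'a set" where
  "plus_part N = N - units N"

definition gen_ideal :: "'a::ab_group_add set \<Rightarrow> 'a set \<Rightarrow> 'a set" where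
  "gen_ideal S M = {s + m | s m. s \<in> S \<and> m \<in> M}"

definition height :: "'a::ab_group_add set \<Rightarrow> 'a set \<Rightarrow> int" where
  "height p M = int (rk M) - int (rk (M - p))"

definition splits_off :: "'a::ab_group_add set \<Rightarrow> 'a set \<Rightarrow> bool" where
  "splits_off N M \<longleftrightarrow> (\<exists>K. face K M \<and> bij_betw (\<lambda>(n, k). n + k) (N \<times> K) M)"

end

theory Submission
  imports Defs "HOL.Modules"
begin


lemma nmul_0[simp]: "nmul 0 x = 0" by (simp add: nmul_def)
lemma nmul_Suc[simp]: "nmul (Suc n) x = x + nmul n x" by (simp add: nmul_def)
lemma nmul_add: "nmul (m+n) x = nmul m x + nmul n x"
  by (induct m) (auto simp: add.assoc)
lemma nmul_distrib: "nmul n (x+y) = nmul n x + nmul n y"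
  by (induct n) (auto simp: algebra_simps)
lemma nmul_zero[simp]: "nmul n 0 = 0" by (induct n) auto
lemma nmul_neg: "nmul n (-x) = - nmul n x"
  by (induct n) (auto simp: algebra_simps)
lemma nmul_diff: "nmul n (x-y) = nmul n x - nmul n y"
  using nmul_distrib[of n x "-y"] nmul_neg[of n y] by simp
lemma nmul_mult: "nmul (m*n) x = nmul m (nmul n x)"
  by (induct m) (auto simp: nmul_add nmul_distrib)

lemma zmul_nat_diff: "zmul (int a - int b) x = nmul a x - nmul b x"
proof (cases "b \<le> a")
  case True
  then have e: "int a - int b = int (a - b)" by simp
  have a: "a = (a-b) + b" using True by simp
  have "nmul a x = nmul (a-b) x + nmul b x" by (subst a, rule nmul_add)
  then show ?thesis unfolding e zmul_def by simp
next
  case False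
  then have e: "int a - int b = - int (b - a)" by simp
  have b: "b = (b-a) + a" using False by simp
  have "nmul b x = nmul (b-a) x + nmul a x" by (subst b, rule nmul_add)
  moreover have "nat (int b - int a) = b - a" by simp
  ultimately show ?thesis using False unfolding e zmul_def by simp
qed

lemma int_as_diff: "\<exists>a b. (i::int) = int a - int b"
  by (rule exI[of _ "nat i"], rule exI[of _ "nat (-i)"]) simp

lemma zmul_right_distrib: "zmul i (x + y) = zmul i x + zmul i y"
proof -
  obtain a b where i: "i = int a - int b" using int_as_diff by blast
  show ?thesis unfolding i zmul_nat_diff nmul_distrib by (simp add: algebra_simps)
qed

lemma zmul_left_distrib: "zmul (i + j) x = zmul i x + zmul j x"
proof -
  obtain a b where i: "i = int a - int b" using int_as_diff by blast
  obtain c d where j: "j = int c - int d" using int_as_diff by blast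
  have e: "i + j = int (a+c) - int (b+d)" by (simp add: i j)
  have "zmul (i + j) x = nmul (a+c) x - nmul (b+d) x" unfolding e by (rule zmul_nat_diff)
  also have "\<dots> = (nmul a x - nmul b x) + (nmul c x - nmul d x)" unfolding nmul_add by (simp add: algebra_simps)
  finally show ?thesis unfolding i j zmul_nat_diff .
qed

lemma zmul_scale: "zmul i (zmul j x) = zmul (i * j) x"
proof -
  obtain a b where i: "i = int a - int b" using int_as_diff by blast
  obtain c d where j: "j = int c - int d" using int_as_diff by blast
  have e: "i * j = int (a*c+b*d) - int (a*d+b*c)" by (simp add: i j algebra_simps)
  have "zmul (i * j) x = nmul (a*c+b*d) x - nmul (a*d+b*c) x" unfolding e by (rule zmul_nat_diff)
  also have "\<dots> = nmul a (nmul c x - nmul d x) - nmul b (nmul c x - nmul d x)"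
    unfolding nmul_add nmul_diff nmul_mult by (simp add: algebra_simps)
  finally show ?thesis unfolding i j zmul_nat_diff by simp
qed

lemma zmul_one: "zmul 1 x = x"
  by (simp add: zmul_def nmul_def)

interpretation Z: module "zmul :: int \<Rightarrow> 'a::ab_group_add \<Rightarrow> 'a"
  by unfold_locales (auto simp: zmul_right_distrib zmul_left_distrib zmul_scale zmul_one)


lemma zindep_iff: "zindep S \<longleftrightarrow> finite S \<and> \<not> Z.dependent S"
proof -
  have "finite S \<Longrightarrow> zindep S \<longleftrightarrow> \<not> (\<exists>u. (\<exists>v \<in> S. u v \<noteq> 0) \<and> (\<Sum>v\<in>S. zmul (u v) v) = 0)"
    unfolding zindep_def by blast
  then show ?thesis using Z.dependent_finite[of S] zindep_def by metis
qed

lemma zmul_int: "zmul (int n) x = nmul n x"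
  using zmul_nat_diff[of n 0 x] by simp

definition rspan :: "'a::ab_group_add set \<Rightarrow> 'a set" where
  "rspan T = {y. \<exists>d. d \<noteq> 0 \<and> zmul d y \<in> Z.span T}"

lemma rspan_span: "Z.span T \<subseteq> rspan T"
  unfolding rspan_def by (auto intro!: exI[of _ 1])

lemma subspace_rspan: "Z.subspace (rspan T)"
  unfolding Z.subspace_def
proof (intro conjI ballI allI)
  show "0 \<in> rspan T" using rspan_span Z.span_zero by blast
next
  fix x y assume "x \<in> rspan T" "y \<in> rspan T"
  then obtain d1 d2 where d: "d1 \<noteq> 0" "zmul d1 x \<in> Z.span T" "d2 \<noteq> 0" "zmul d2 y \<in> Z.span T"
    unfolding rspan_def by blast
  have "zmul (d1*d2) (x + y) = zmul d2 (zmul d1 x) + zmul d1 (zmul d2 y)"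
    by (simp add: Z.scale_right_distrib mult.commute)
  also have "\<dots> \<in> Z.span T" using d by (metis Z.span_add Z.span_scale)
  finally show "x + y \<in> rspan T" using d unfolding rspan_def by (auto intro!: exI[of _ "d1*d2"])
next
  fix c x assume "x \<in> rspan T"
  then obtain d where d: "d \<noteq> 0" "zmul d x \<in> Z.span T"
    unfolding rspan_def by blast
  have "zmul d (zmul c x) = zmul c (zmul d x)" by (simp add: mult.commute)
  also have "\<dots> \<in> Z.span T" using d by (metis Z.span_scale)
  finally show "zmul c x \<in> rspan T" using d unfolding rspan_def by auto
qed

lemma rspan_base: "T \<subseteq> rspan T"
  using rspan_span Z.span_superset by blast

lemma span_rspan: "U \<subseteq> rspan T \<Longrightarrow> Z.span U \<subseteq> rspan T"
  by (rule Z.span_minimal[OF _ subspace_rspan])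

lemma rspan_trans: assumes "U \<subseteq> rspan T" shows "rspan U \<subseteq> rspan T"
proof
  fix y assume "y \<in> rspan U"
  then obtain d where d: "d \<noteq> 0" "zmul d y \<in> Z.span U" unfolding rspan_def by blast
  then have "zmul d y \<in> rspan T" using span_rspan[OF assms] by blast
  then obtain d' where d': "d' \<noteq> 0" "zmul d' (zmul d y) \<in> Z.span T" unfolding rspan_def by blast
  then show "y \<in> rspan T" using d unfolding rspan_def by (auto intro!: exI[of _ "d' * d"])
qed

lemma rspan_mono: "U \<subseteq> T \<Longrightarrow> rspan U \<subseteq> rspan T"
  by (meson order_trans rspan_base rspan_trans)



lemma dep_family:
  assumes "finite T"
  shows "finite I \<Longrightarrow> card T < card I \<Longrightarrow> (\<forall>i\<in>I. f i \<in> Z.span T) \<Longrightarrow>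
    \<exists>c. (\<Sum>i\<in>I. zmul (c i) (f i)) = 0 \<and> (\<exists>i\<in>I. c i \<noteq> 0)"
  using assms
proof (induction T arbitrary: I f rule: finite_induct)
  case empty
  then obtain i where "i \<in> I" by fastforce
  have "\<forall>i\<in>I. f i = 0" using empty by auto
  then show ?case using \<open>i \<in> I\<close> by (intro exI[of _ "\<lambda>_. 1"]) auto
next
  case (insert t T I f)
  have "\<forall>i\<in>I. \<exists>k. f i - zmul k t \<in> Z.span T"
    using insert.prems(3) Z.span_breakdown_eq by blast
  then obtain a where a: "\<And>i. i \<in> I \<Longrightarrow> f i - zmul (a i) t \<in> Z.span T" by metis
  show ?case
  proof (cases "\<forall>i\<in>I. a i = 0")
    case True
    then have "\<forall>i\<in>I. f i \<in> Z.span T" using a by force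
    moreover have "card T < card I" using insert by simp
    ultimately show ?thesis using insert.IH insert.prems(1) by blast
  next
    case False
    then obtain i0 where i0: "i0 \<in> I" "a i0 \<noteq> 0" by blast
    define g where "g i = zmul (a i0) (f i) - zmul (a i) (f i0)" for i
    have g: "\<forall>i\<in>I - {i0}. g i \<in> Z.span T"
    proof
      fix i assume i: "i \<in> I - {i0}"
      have "g i = zmul (a i0) (f i - zmul (a i) t) - zmul (a i) (f i0 - zmul (a i0) t)"
        unfolding g_def by (simp add: Z.scale_right_diff_distrib mult.commute)
      also have "\<dots> \<in> Z.span T" using a i i0
        by (metis DiffD1 Z.span_diff Z.span_scale)
      finally show "g i \<in> Z.span T" .
    qed
    have cI: "card (I - {i0}) = card I - 1" using i0 insert.prems(1) by simp
    have "card T < card (I - {i0})" using insert cI by simp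
    then obtain c' where c': "(\<Sum>i\<in>I - {i0}. zmul (c' i) (g i)) = 0" "\<exists>i\<in>I - {i0}. c' i \<noteq> 0"
      using insert.IH[of "I - {i0}" g] g insert.prems(1) by blast
    define c where "c i = (if i = i0 then - (\<Sum>j\<in>I - {i0}. c' j * a j) else c' i * a i0)" for i
    have "(\<Sum>i\<in>I. zmul (c i) (f i)) = zmul (c i0) (f i0) + (\<Sum>i\<in>I - {i0}. zmul (c i) (f i))"
      using i0 insert.prems(1) by (simp add: sum.remove)
    also have "(\<Sum>i\<in>I - {i0}. zmul (c i) (f i)) = (\<Sum>i\<in>I - {i0}. zmul (c' i * a i0) (f i))"
      by (rule sum.cong) (auto simp: c_def)
    also have "zmul (c i0) (f i0) = - (\<Sum>j\<in>I - {i0}. zmul (c' j * a j) (f i0))"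
      by (simp add: c_def Z.scale_sum_left)
    also have "- (\<Sum>j\<in>I - {i0}. zmul (c' j * a j) (f i0)) + (\<Sum>i\<in>I - {i0}. zmul (c' i * a i0) (f i))
       = (\<Sum>i\<in>I - {i0}. zmul (c' i) (g i))"
      by (simp add: g_def Z.scale_right_diff_distrib sum_subtractf)
    finally have "(\<Sum>i\<in>I. zmul (c i) (f i)) = 0" using c' by simp
    moreover have "\<exists>i\<in>I. c i \<noteq> 0" using c' i0 by (auto simp: c_def)
    ultimately show ?thesis by blast
  qed
qed

lemma indep_card_le:
  assumes "zindep S" "finite T" "S \<subseteq> rspan T"
  shows "card S \<le> card T"
proof (rule ccontr)
  assume "\<not> ?thesis"
  then have lt: "card T < card S" by simp
  have "\<forall>s\<in>S. \<exists>d. d \<noteq> 0 \<and> zmul d s \<in> Z.span T" using assms(3) unfolding rspan_def by blast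
  then obtain d where d: "\<And>s. s \<in> S \<Longrightarrow> d s \<noteq> 0 \<and> zmul (d s) s \<in> Z.span T" by metis
  have fS: "finite S" using assms(1) zindep_def by blast
  obtain c where c: "(\<Sum>s\<in>S. zmul (c s) (zmul (d s) s)) = 0" "\<exists>s\<in>S. c s \<noteq> 0"
    using dep_family[OF assms(2) fS lt, of "\<lambda>s. zmul (d s) s"] d by blast
  have "(\<Sum>s\<in>S. zmul (c s * d s) s) = 0" using c by simp
  then have "\<forall>s\<in>S. c s * d s = 0" using assms(1) unfolding zindep_def
    by (elim conjE allE[of _ "\<lambda>s. c s * d s"]) auto
  then show False using c d by auto
qed



lemma submonoid_nmul: "submonoid X \<Longrightarrow> x \<in> X \<Longrightarrow> nmul n x \<in> X"
  by (induct n) (auto simp: submonoid_def)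

lemma submonoid_sum: assumes "submonoid X" "\<And>i. i \<in> A \<Longrightarrow> f i \<in> X" shows "sum f A \<in> X"
proof (cases "finite A")
  case True
  then show ?thesis using assms(2)
    by (induct A rule: finite_induct) (use assms(1) in \<open>auto simp: submonoid_def\<close>)
next
  case False
  then show ?thesis using assms(1) by (simp add: submonoid_def)
qed

lemma gp_mono: "X \<subseteq> Y \<Longrightarrow> gp X \<subseteq> gp Y"
  unfolding gp_def by blast

lemma gp_sub: "submonoid X \<Longrightarrow> X \<subseteq> gp X"
  unfolding gp_def submonoid_def by force

lemma gp_subspace: assumes "submonoid X" shows "Z.subspace (gp X)"
  unfolding Z.subspace_def
proof (intro conjI ballI allI)
  show "0 \<in> gp X" using assms unfolding gp_def submonoid_def by force
next
  fix x y assume "x \<in> gp X" "y \<in> gp X"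
  then obtain a b c d where "x = a - b" "y = c - d" "a \<in> X" "b \<in> X" "c \<in> X" "d \<in> X"
    unfolding gp_def by blast
  then show "x + y \<in> gp X" unfolding gp_def using assms unfolding submonoid_def
    by (intro CollectI exI[of _ "a + c"] exI[of _ "b + d"]) (auto simp: algebra_simps)
next
  fix k x assume "x \<in> gp X"
  then obtain a b where ab: "x = a - b" "a \<in> X" "b \<in> X" unfolding gp_def by blast
  obtain p q where k: "k = int p - int q" using int_as_diff by blast
  have "zmul k x = (nmul p a + nmul q b) - (nmul p b + nmul q a)"
    unfolding k zmul_nat_diff ab nmul_diff by (simp add: algebra_simps)
  moreover have "nmul p a + nmul q b \<in> X" "nmul p b + nmul q a \<in> X"
    using assms ab submonoid_nmul unfolding submonoid_def by metis+
  ultimately show "zmul k x \<in> gp X" unfolding gp_def by blast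
qed

lemma fin_gen_rspan: assumes "fin_gen M" shows "\<exists>G. finite G \<and> gp M \<subseteq> rspan G"
proof -
  obtain G where G: "finite G" "G \<subseteq> M" "M = {\<Sum>g\<in>G. nmul (c g) g | c. True}"
    using assms unfolding fin_gen_def by blast
  have "M \<subseteq> Z.span G"
  proof
    fix m assume "m \<in> M"
    then obtain c where "m = (\<Sum>g\<in>G. nmul (c g) g)" using G by blast
    then have "m = (\<Sum>g\<in>G. zmul (int (c g)) g)" by (simp add: zmul_int)
    moreover have "(\<Sum>g\<in>G. zmul (int (c g)) g) \<in> Z.span G"
      by (rule Z.span_sum, rule Z.span_scale, rule Z.span_base, assumption)
    ultimately show "m \<in> Z.span G" by simp
  qed
  then have "gp M \<subseteq> Z.span G" unfolding gp_def using Z.span_diff by blast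
  then show ?thesis using G(1) rspan_span by blast
qed

lemma zindep_empty: "zindep {}" by (simp add: zindep_def)

lemma rk_facts:
  assumes "finite G" "gp X \<subseteq> rspan G"
  shows rk_ge: "S \<subseteq> gp X \<Longrightarrow> zindep S \<Longrightarrow> card S \<le> rk X"
    and rk_ex: "\<exists>A. A \<subseteq> gp X \<and> zindep A \<and> card A = rk X"
proof -
  let ?C = "{card S | S. S \<subseteq> gp X \<and> zindep S}"
  have "?C \<subseteq> {..card G}" using indep_card_le assms by fastforce
  then have fin: "finite ?C" using finite_subset by blast
  have ne: "?C \<noteq> {}" using zindep_empty by blast
  show "S \<subseteq> gp X \<Longrightarrow> zindep S \<Longrightarrow> card S \<le> rk X"
    unfolding rk_def using fin by (intro Max_ge) auto
  have "rk X \<in> ?C" unfolding rk_def using fin ne by (rule Max_in)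
  then show "\<exists>A. A \<subseteq> gp X \<and> zindep A \<and> card A = rk X" by auto
qed

lemma max_indep_rspan:
  assumes "finite G" "gp X \<subseteq> rspan G" "A \<subseteq> gp X" "zindep A" "card A = rk X"
  shows "gp X \<subseteq> rspan A"
proof
  fix y assume y: "y \<in> gp X"
  show "y \<in> rspan A"
  proof (cases "y \<in> A")
    case True then show ?thesis using rspan_base by blast
  next
    case False
    have fA: "finite A" using assms(4) zindep_def by blast
    have "card (insert y A) = rk X + 1" using False fA assms(5) by simp
    then have "\<not> zindep (insert y A)" using rk_ge[OF assms(1,2), of "insert y A"] assms(3) y by auto
    then have "Z.dependent (insert y A)" using fA zindep_iff by auto
    then obtain u where u: "\<exists>v\<in>insert y A. u v \<noteq> 0" "(\<Sum>v\<in>insert y A. zmul (u v) v) = 0"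
      using Z.dependent_finite[of "insert y A"] fA by auto
    then have eq: "zmul (u y) y + (\<Sum>v\<in>A. zmul (u v) v) = 0" using False fA by simp
    have "u y \<noteq> 0"
    proof
      assume "u y = 0"
      then have "(\<Sum>v\<in>A. zmul (u v) v) = 0" using eq by simp
      then have "\<forall>v\<in>A. u v = 0" using assms(4) unfolding zindep_def by blast
      then show False using u(1) \<open>u y = 0\<close> by auto
    qed
    moreover have "zmul (u y) y = (\<Sum>v\<in>A. zmul (- u v) v)"
      using eq by (simp add: sum_negf eq_neg_iff_add_eq_0)
    moreover have "(\<Sum>v\<in>A. zmul (- u v) v) \<in> Z.span A"
      by (rule Z.span_sum, rule Z.span_scale, rule Z.span_base, assumption)
    ultimately show ?thesis unfolding rspan_def by auto
  qed
qed



lemma torsion_zmul: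
  assumes "torsion_free V" "x \<in> V" "d \<noteq> 0" "zmul d x = 0" shows "x = 0"
proof (cases "d \<ge> 0")
  case True
  then have "nmul (nat d) x = 0" "nat d > 0" using assms(3,4) by (auto simp: zmul_def)
  then show ?thesis using assms(1,2) unfolding torsion_free_def by blast
next
  case False
  then have "nmul (nat (-d)) x = 0" "nat (-d) > 0" using assms(3,4) by (auto simp: zmul_def)
  then show ?thesis using assms(1,2) unfolding torsion_free_def by blast
qed

lemma zindep_nonzero: "zindep A \<Longrightarrow> 0 \<notin> A"
  using zindep_iff Z.dependent_zero by blast

lemma zindep_sum0: "zindep A \<Longrightarrow> (\<Sum>s\<in>A. zmul (c s) s) = 0 \<Longrightarrow> s \<in> A \<Longrightarrow> c s = 0"
  unfolding zindep_def by blast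

lemma rk_super:
  assumes G: "finite G" "gp M \<subseteq> rspan G" and sm: "submonoid N" "submonoid K"
    and sub: "N \<subseteq> M" "K \<subseteq> M" and disj: "gp N \<inter> gp K = {0}"
  shows "rk N + rk K \<le> rk M"
proof -
  have GN: "gp N \<subseteq> rspan G" using G(2) gp_mono[OF sub(1)] by blast
  have GK: "gp K \<subseteq> rspan G" using G(2) gp_mono[OF sub(2)] by blast
  obtain AN where AN: "AN \<subseteq> gp N" "zindep AN" "card AN = rk N" using rk_ex[OF G(1) GN] by blast
  obtain AK where AK: "AK \<subseteq> gp K" "zindep AK" "card AK = rk K" using rk_ex[OF G(1) GK] by blast
  have fin: "finite AN" "finite AK" using AN AK zindep_def by blast+
  have dj: "AN \<inter> AK = {}"
  proof (rule ccontr)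
    assume "AN \<inter> AK \<noteq> {}"
    then obtain a where "a \<in> AN" "a \<in> AK" by blast
    then have "a \<in> gp N \<inter> gp K" using AN(1) AK(1) by blast
    then have "a = 0" using disj by blast
    then show False using \<open>a \<in> AN\<close> zindep_nonzero[OF AN(2)] by simp
  qed
  have ind: "zindep (AN \<union> AK)" unfolding zindep_def
  proof (intro conjI allI impI ballI)
    show "finite (AN \<union> AK)" using fin by simp
  next
    fix c s assume h: "(\<Sum>s\<in>AN \<union> AK. zmul (c s) s) = 0" "s \<in> AN \<union> AK"
    let ?s1 = "\<Sum>s\<in>AN. zmul (c s) s" and ?s2 = "\<Sum>s\<in>AK. zmul (c s) s"
    have e: "?s1 + ?s2 = 0" using h(1) fin dj by (simp add: sum.union_disjoint)
    have "?s1 \<in> gp N"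
      using gp_subspace[OF sm(1)] AN(1) by (intro Z.subspace_sum Z.subspace_scale) auto
    moreover have "?s2 \<in> gp K"
      using gp_subspace[OF sm(2)] AK(1) by (intro Z.subspace_sum Z.subspace_scale) auto
    moreover have "?s1 = - ?s2" using e by (simp add: eq_neg_iff_add_eq_0)
    ultimately have "?s1 \<in> gp N \<inter> gp K" using Z.subspace_neg[OF gp_subspace[OF sm(2)]] by auto
    then have "?s1 = 0" using disj by blast
    moreover then have "?s2 = 0" using e by simp
    ultimately show "c s = 0" using h(2) zindep_sum0[OF AN(2), of c s] zindep_sum0[OF AK(2), of c s] by auto
  qed
  have "AN \<union> AK \<subseteq> gp M" using AN(1) AK(1) gp_mono[OF sub(1)] gp_mono[OF sub(2)] by blast
  then have "card (AN \<union> AK) \<le> rk M" using rk_ge[OF G] ind by blast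
  then show ?thesis using card_Un_disjoint[OF fin dj] AN AK by simp
qed

lemma rk_strict:
  assumes G: "finite G" "gp M \<subseteq> rspan G" and sm: "submonoid N" "submonoid K"
    and sub: "N \<subseteq> M" "K \<subseteq> M"
    and sum: "gp M \<subseteq> {a + b | a b. a \<in> gp N \<and> b \<in> gp K}"
    and x: "x \<in> gp N" "x \<in> gp K" "x \<noteq> 0" and tf: "torsion_free (gp M)"
  shows "rk M < rk N + rk K"
proof -
  have GN: "gp N \<subseteq> rspan G" using G(2) gp_mono[OF sub(1)] by blast
  have GK: "gp K \<subseteq> rspan G" using G(2) gp_mono[OF sub(2)] by blast
  obtain AN where AN: "AN \<subseteq> gp N" "zindep AN" "card AN = rk N" using rk_ex[OF G(1) GN] by blast
  obtain AK where AK: "AK \<subseteq> gp K" "zindep AK" "card AK = rk K" using rk_ex[OF G(1) GK] by blast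
  obtain AM where AM: "AM \<subseteq> gp M" "zindep AM" "card AM = rk M" using rk_ex[OF G] by blast
  have fin: "finite AN" "finite AK" using AN AK zindep_def by blast+
  have RN: "gp N \<subseteq> rspan AN" using max_indep_rspan[OF G(1) GN AN] .
  have RK: "gp K \<subseteq> rspan AK" using max_indep_rspan[OF G(1) GK AK] .
  obtain e1 where e1: "e1 \<noteq> 0" "zmul e1 x \<in> Z.span AN" using RN x(1) unfolding rspan_def by blast
  obtain e2 where e2: "e2 \<noteq> 0" "zmul e2 x \<in> Z.span AK" using RK x(2) unfolding rspan_def by blast
  obtain \<alpha> where \<alpha>: "zmul e1 x = (\<Sum>a\<in>AN. zmul (\<alpha> a) a)"
    using e1(2) Z.span_finite[OF fin(1)] by auto
  have "zmul e1 x \<noteq> 0"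
    using torsion_zmul[OF tf _ e1(1)] x gp_mono[OF sub(1)] by blast
  then obtain a0 where a0: "a0 \<in> AN" "\<alpha> a0 \<noteq> 0" using \<alpha> by (metis (no_types, lifting) sum.neutral Z.scale_zero_left)
  define T where "T = (AN - {a0}) \<union> AK"
  have finT: "finite T" using fin by (simp add: T_def)
  have "zmul e2 (zmul e1 x) = zmul (e2 * \<alpha> a0) a0 + (\<Sum>a\<in>AN - {a0}. zmul (e2 * \<alpha> a) a)"
    unfolding \<alpha> Z.scale_sum_right using a0 fin(1) by (simp add: sum.remove)
  then have eqa: "zmul (e2 * \<alpha> a0) a0 = zmul e1 (zmul e2 x) - (\<Sum>a\<in>AN - {a0}. zmul (e2 * \<alpha> a) a)"
    by (simp add: mult.commute eq_diff_eq)
  have "zmul e1 (zmul e2 x) \<in> Z.span T"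
    using e2(2) Z.span_mono[of AK T] Z.span_scale unfolding T_def by blast
  moreover have "(\<Sum>a\<in>AN - {a0}. zmul (e2 * \<alpha> a) a) \<in> Z.span T"
    by (rule Z.span_sum, rule Z.span_scale, rule Z.span_base) (auto simp: T_def)
  ultimately have "zmul (e2 * \<alpha> a0) a0 \<in> Z.span T" unfolding eqa by (rule Z.span_diff)
  then have "a0 \<in> rspan T" unfolding rspan_def using e2(1) a0(2) by (auto intro!: exI[of _ "e2 * \<alpha> a0"])
  then have "AN \<union> AK \<subseteq> rspan T" using rspan_base[of T] unfolding T_def by blast
  then have U: "rspan (AN \<union> AK) \<subseteq> rspan T" by (rule rspan_trans)
  have "gp M \<subseteq> rspan T"
  proof
    fix y assume "y \<in> gp M"
    then obtain a b where y: "y = a + b" "a \<in> gp N" "b \<in> gp K" using sum by blast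
    have "a \<in> rspan (AN \<union> AK)" using y(2) RN rspan_mono[of AN "AN \<union> AK"] by blast
    moreover have "b \<in> rspan (AN \<union> AK)" using y(3) RK rspan_mono[of AK "AN \<union> AK"] by blast
    ultimately have "y \<in> rspan (AN \<union> AK)" using y(1) Z.subspace_add[OF subspace_rspan] by blast
    then show "y \<in> rspan T" using U by blast
  qed
  then have "card AM \<le> card T" using indep_card_le[OF AM(2) finT] AM(1) by blast
  also have "card T \<le> card (AN - {a0}) + card AK" unfolding T_def by (rule card_Un_le)
  also have "card (AN - {a0}) = card AN - 1" using a0 fin by simp
  finally have le: "card AM \<le> card AN - 1 + card AK" .
  have "card AN > 0" using a0(1) fin(1) card_gt_0_iff by blast
  then show ?thesis using le AM(3) AN(3) AK(3) by linarith
qed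



definition gens :: "'a::ab_group_add set \<Rightarrow> 'a set \<Rightarrow> bool" where
  "gens G M \<longleftrightarrow> finite G \<and> G \<subseteq> M \<and> M = {\<Sum>g\<in>G. nmul (c g) g | c. True}"

lemma nmul_sum: "nmul k (sum f A) = (\<Sum>x\<in>A. nmul k (f x))"
  using Z.scale_sum_right[of "int k" f A] by (simp add: zmul_int)

locale sharpm =
  fixes M :: "'a::ab_group_add set"
  assumes sm: "submonoid M" and sh: "sharp M"
begin

lemma sh1: "x \<in> M \<Longrightarrow> y \<in> M \<Longrightarrow> x + y = 0 \<Longrightarrow> x = 0"
  using sh unfolding sharp_def units_def by blast

lemma sh_sum: "finite A \<Longrightarrow> (\<forall>i\<in>A. f i \<in> M) \<Longrightarrow> sum f A = 0 \<Longrightarrow> \<forall>i\<in>A. f i = 0"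
proof (induct A rule: finite_induct)
  case empty then show ?case by simp
next
  case (insert a A)
  have s: "sum f A \<in> M" by (rule submonoid_sum[OF sm]) (use insert.prems in auto)
  have e: "f a + sum f A = 0" using insert by simp
  have fa: "f a \<in> M" using insert.prems by simp
  have "f a = 0" by (rule sh1[OF fa s e])
  moreover have "sum f A = 0" using e \<open>f a = 0\<close> by simp
  then have "\<forall>i\<in>A. f i = 0" using insert.hyps(3) insert.prems by simp
  then show ?case using \<open>f a = 0\<close> by simp
qed

lemma sh_nmul: "h \<in> M \<Longrightarrow> h \<noteq> 0 \<Longrightarrow> nmul k h = 0 \<Longrightarrow> k = 0"
proof (cases k)
  case (Suc k')
  assume h: "h \<in> M" "h \<noteq> 0" "nmul k h = 0"
  then have "h + nmul k' h = 0" using Suc by simp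
  then have "h = 0" using sh1[OF h(1) submonoid_nmul[OF sm h(1)]] by simp
  then show ?thesis using h by simp
qed simp

end

lemma gens_remove0: assumes "gens G M" shows "gens (G - {0}) M"
proof -
  have "\<And>c. (\<Sum>g\<in>G. nmul (c g) g) = (\<Sum>g\<in>G - {0}. nmul (c g) g)"
    using assms unfolding gens_def by (intro sum.mono_neutral_right) auto
  then show ?thesis using assms unfolding gens_def by auto
qed

lemma gens_remove:
  assumes "gens G M" "g \<in> G" "g = (\<Sum>h\<in>G - {g}. nmul (\<gamma> h) h)"
  shows "gens (G - {g}) M"
proof -
  have fG: "finite G" using assms(1) gens_def by blast
  have "M = {\<Sum>h\<in>G - {g}. nmul (c h) h | c. True}"
  proof (intro set_eqI iffI)
    fix m assume "m \<in> M"
    then obtain c where m: "m = (\<Sum>h\<in>G. nmul (c h) h)" using assms(1) unfolding gens_def by blast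
    also have "\<dots> = nmul (c g) g + (\<Sum>h\<in>G - {g}. nmul (c h) h)"
      using fG assms(2) by (simp add: sum.remove)
    also have "nmul (c g) g = (\<Sum>h\<in>G - {g}. nmul (c g * \<gamma> h) h)"
      by (subst assms(3)) (simp add: nmul_sum nmul_mult)
    also have "(\<Sum>h\<in>G - {g}. nmul (c g * \<gamma> h) h) + (\<Sum>h\<in>G - {g}. nmul (c h) h)
        = (\<Sum>h\<in>G - {g}. nmul (c g * \<gamma> h + c h) h)"
      by (simp add: nmul_add sum.distrib)
    finally show "m \<in> {\<Sum>h\<in>G - {g}. nmul (c h) h | c. True}"
      by (intro CollectI exI[of _ "\<lambda>h. c g * \<gamma> h + c h"]) simp
  next
    fix m assume "m \<in> {\<Sum>h\<in>G - {g}. nmul (c h) h | c. True}"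
    then obtain c where m: "m = (\<Sum>h\<in>G - {g}. nmul (c h) h)" by blast
    have "(\<Sum>h\<in>G. nmul ((c(g:=0)) h) h) = nmul ((c(g:=0)) g) g + (\<Sum>h\<in>G - {g}. nmul ((c(g:=0)) h) h)"
      using fG assms(2) by (simp add: sum.remove)
    also have "\<dots> = (\<Sum>h\<in>G - {g}. nmul ((c(g:=0)) h) h)" by simp
    also have "\<dots> = m" unfolding m by (rule sum.cong) auto
    finally show "m \<in> M" using assms(1) unfolding gens_def by blast
  qed
  then show ?thesis using assms(1) unfolding gens_def by auto
qed

lemma (in sharpm) atom:
  assumes G: "gens G M" and min: "\<And>G'. gens G' M \<Longrightarrow> card G \<le> card G'" and z: "0 \<notin> G"
    and g: "g \<in> G" and ab: "a \<in> M" "b \<in> M" "g = a + b"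
  shows "a = 0 \<or> b = 0"
proof -
  have fG: "finite G" and GM: "G \<subseteq> M" using G gens_def by blast+
  obtain \<alpha> where \<alpha>: "a = (\<Sum>h\<in>G. nmul (\<alpha> h) h)" using G ab(1) unfolding gens_def by blast
  obtain \<beta> where \<beta>: "b = (\<Sum>h\<in>G. nmul (\<beta> h) h)" using G ab(2) unfolding gens_def by blast
  define \<gamma> where "\<gamma> h = \<alpha> h + \<beta> h" for h
  define R where "R = (\<Sum>h\<in>G - {g}. nmul (\<gamma> h) h)"
  have "g = (\<Sum>h\<in>G. nmul (\<gamma> h) h)" unfolding ab(3) \<alpha> \<beta> \<gamma>_def by (simp add: nmul_add sum.distrib)
  also have "\<dots> = nmul (\<gamma> g) g + R" unfolding R_def using fG g by (simp add: sum.remove)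
  finally have gR: "g = nmul (\<gamma> g) g + R" .
  have RM: "R \<in> M" unfolding R_def using GM by (intro submonoid_sum[OF sm] submonoid_nmul[OF sm]) auto
  show ?thesis
  proof (cases "\<gamma> g")
    case 0
    then have "gens (G - {g}) M" using gens_remove[OF G g, of \<gamma>] gR R_def by simp
    then have "card G \<le> card (G - {g})" using min by blast
    then show ?thesis using fG g card_Diff1_less[OF fG g] by simp
  next
    case (Suc k)
    then have "g + (nmul k g + R) = g + 0" using gR by (simp add: add.assoc)
    then have e: "nmul k g + R = 0" by (rule add_left_imp_eq)
    have gM: "g \<in> M" using GM g by blast
    have "nmul k g = 0" using sh1[OF submonoid_nmul[OF sm gM] RM e] .
    moreover have "g \<noteq> 0" using g z by blast
    ultimately have k0: "k = 0" using sh_nmul[OF gM] by blast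
    have "R = 0" using e \<open>nmul k g = 0\<close> by simp
    then have "\<forall>h\<in>G - {g}. nmul (\<gamma> h) h = 0" unfolding R_def
      using sh_sum[of "G - {g}" "\<lambda>h. nmul (\<gamma> h) h"] fG GM submonoid_nmul[OF sm] by blast
    have rest: "\<forall>h\<in>G - {g}. \<alpha> h = 0 \<and> \<beta> h = 0"
    proof
      fix h assume h: "h \<in> G - {g}"
      have hM: "h \<in> M" "h \<noteq> 0" using h GM z by auto
      have "\<gamma> h = 0" using sh_nmul[OF hM] h \<open>\<forall>h\<in>G - {g}. nmul (\<gamma> h) h = 0\<close> by blast
      then show "\<alpha> h = 0 \<and> \<beta> h = 0" unfolding \<gamma>_def by simp
    qed
    have one: "\<alpha> g + \<beta> g = 1" using Suc k0 \<gamma>_def by simp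
    show ?thesis
    proof (cases "\<alpha> g = 0")
      case True
      then have "\<forall>h\<in>G. \<alpha> h = 0" using rest by auto
      then show ?thesis unfolding \<alpha> by simp
    next
      case False
      then have "\<beta> g = 0" using one by simp
      then have "\<forall>h\<in>G. \<beta> h = 0" using rest by auto
      then show ?thesis unfolding \<beta> by simp
    qed
  qed
qed

lemma min_gens:
  assumes "fin_gen M"
  shows "\<exists>G. gens G M \<and> 0 \<notin> G \<and> (\<forall>G'. gens G' M \<longrightarrow> card G \<le> card G')"
proof -
  have "\<exists>G. gens G M" using assms unfolding fin_gen_def gens_def .
  then obtain G1 where "gens G1 M" by (elim exE)
  then have ex: "\<exists>G. gens G M \<and> card G = card G1" by blast
  define n where "n = (LEAST n. \<exists>G. gens G M \<and> card G = n)"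
  have "\<exists>G. gens G M \<and> card G = n" unfolding n_def by (rule LeastI_ex) (use ex in blast)
  then obtain G where G: "gens G M" "card G = n" by blast
  have min: "\<forall>G'. gens G' M \<longrightarrow> card G \<le> card G'"
  proof (intro allI impI)
    fix G' assume "gens G' M"
    then have "n \<le> card G'" unfolding n_def by (intro Least_le) blast
    then show "card G \<le> card G'" using G(2) by simp
  qed
  have G0: "gens (G - {0}) M" using gens_remove0[OF G(1)] .
  have "card (G - {0}) \<le> card G" using G(1) unfolding gens_def by (simp add: card_Diff1_le)
  then have "\<forall>G'. gens G' M \<longrightarrow> card (G - {0}) \<le> card G'" using min order_trans by blast
  then show ?thesis using G0 by blast
qed



lemma units_N:
  assumes "sharp M" "face N M" shows "units N = {0}"
proof -
  have "0 \<in> N" using assms(2) unfolding face_def submonoid_def by blast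
  then have "0 \<in> units N" unfolding units_def by auto
  moreover have "units N \<subseteq> units M" using assms(2) unfolding face_def units_def by blast
  ultimately show ?thesis using assms(1) unfolding sharp_def by blast
qed

lemma plus_part_eq: "sharp M \<Longrightarrow> face N M \<Longrightarrow> plus_part N = N - {0}"
  unfolding plus_part_def using units_N by metis

lemma ideal_I: assumes "submonoid M" "face N M" shows "ideal (gen_ideal (plus_part N) M) M"
  unfolding ideal_def
proof (intro conjI ballI)
  have NM: "N \<subseteq> M" using assms(2) face_def by blast
  show "gen_ideal (plus_part N) M \<subseteq> M"
  proof
    fix x assume "x \<in> gen_ideal (plus_part N) M"
    then obtain s m where "x = s + m" "s \<in> N" "m \<in> M"
      unfolding gen_ideal_def plus_part_def by blast
    then show "x \<in> M" using NM assms(1) unfolding submonoid_def by blast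
  qed
next
  fix x m assume x: "x \<in> gen_ideal (plus_part N) M" and m: "m \<in> M"
  then obtain s m' where "x = s + m'" "s \<in> plus_part N" "m' \<in> M"
    unfolding gen_ideal_def by blast
  then have "x + m = s + (m' + m)" "m' + m \<in> M" using m assms(1) unfolding submonoid_def
    by (auto simp: add.assoc)
  then show "x + m \<in> gen_ideal (plus_part N) M" unfolding gen_ideal_def using \<open>s \<in> plus_part N\<close> by blast
qed

lemma forward:
  assumes tor: "toric M" and sh: "sharp M" and fa: "face N M" and spl: "splits_off N M"
  shows "prime_ideal (gen_ideal (plus_part N) M) M \<and>
         rk (M - gen_ideal (plus_part N) M) + rk N \<le> rk M"
proof -
  let ?I = "gen_ideal (plus_part N) M"
  have smM: "submonoid M" using tor toric_def by blast
  have smN: "submonoid N" and NM: "N \<subseteq> M" using fa face_def by blast+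
  obtain K where K: "face K M" and bij: "bij_betw (\<lambda>(n, k). n + k) (N \<times> K) M"
    using spl unfolding splits_off_def by (elim exE conjE)
  have smK: "submonoid K" and KM: "K \<subseteq> M" using K face_def by blast+
  have inj: "inj_on (\<lambda>(n, k). n + k) (N \<times> K)" and img: "(\<lambda>(n, k). n + k) ` (N \<times> K) = M"
    using bij unfolding bij_betw_def by simp_all
  have N0: "0 \<in> N" and K0: "0 \<in> K" using smN smK submonoid_def by blast+
  have injE: "\<And>a b c d. a \<in> N \<Longrightarrow> b \<in> K \<Longrightarrow> c \<in> N \<Longrightarrow> d \<in> K \<Longrightarrow> a + b = c + d \<Longrightarrow> a = c \<and> b = d"
  proof -
    fix a b c d assume h: "a \<in> N" "b \<in> K" "c \<in> N" "d \<in> K" "a + b = c + d"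
    have "(\<lambda>(n, k). n + k) (a, b) = (\<lambda>(n, k). n + k) (c, d)" using h(5) by simp
    then have "(a, b) = (c, d)" by (rule inj_onD[OF inj]) (use h in simp_all)
    then show "a = c \<and> b = d" by simp
  qed
  have pp: "plus_part N = N - {0}" using plus_part_eq[OF sh fa] .
  have KI: "M - ?I = K"
  proof (intro set_eqI iffI)
    fix m assume m: "m \<in> M - ?I"
    then have "m \<in> (\<lambda>(n, k). n + k) ` (N \<times> K)" using img by simp
    then obtain n k where nk: "m = n + k" "n \<in> N" "k \<in> K" by auto
    show "m \<in> K"
    proof (cases "n = 0")
      case True then show ?thesis using nk by simp
    next
      case False
      then have "m \<in> ?I" unfolding gen_ideal_def pp using nk KM by blast
      then show ?thesis using m by simp
    qed
  next
    fix k assume k: "k \<in> K"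
    have "k \<notin> ?I"
    proof
      assume "k \<in> ?I"
      then obtain s m where sm: "k = s + m" "s \<in> N" "s \<noteq> 0" "m \<in> M"
        unfolding gen_ideal_def pp by blast
      have fK: "\<forall>x\<in>M. \<forall>y\<in>M. x + y \<in> K \<longrightarrow> x \<in> K \<and> y \<in> K" using K unfolding face_def by blast
      have "s \<in> M" using sm(2) NM by blast
      then have "s \<in> K" using fK sm(4) k sm(1) by blast
      then have "s = 0" using injE[OF sm(2) K0 N0 \<open>s \<in> K\<close>] by simp
      then show False using sm by simp
    qed
    then show "k \<in> M - ?I" using k KM by blast
  qed
  have prime: "prime_ideal ?I M" unfolding prime_ideal_def KI using ideal_I[OF smM fa] smK by blast
  have disj: "gp N \<inter> gp K = {0}"
  proof
    show "gp N \<inter> gp K \<subseteq> {0}"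
    proof
      fix y assume "y \<in> gp N \<inter> gp K"
      then obtain a b c d where y: "y = a - b" "a \<in> N" "b \<in> N" "y = c - d" "c \<in> K" "d \<in> K"
        unfolding gp_def by blast
      then have "a + d = b + c" by (simp add: algebra_simps)
      then have "a = b" using injE[OF y(2) y(6) y(3) y(5)] by simp
      then show "y \<in> {0}" using y by simp
    qed
    show "{0} \<subseteq> gp N \<inter> gp K" using Z.subspace_0[OF gp_subspace[OF smN]] Z.subspace_0[OF gp_subspace[OF smK]] by blast
  qed
  obtain G where G: "finite G" "gp M \<subseteq> rspan G" using fin_gen_rspan tor toric_def by blast
  have "rk N + rk K \<le> rk M" using rk_super[OF G smN smK NM KM disj] .
  then show ?thesis using prime KI by simp
qed

lemma gensD: "gens G M \<Longrightarrow> finite G" "gens G M \<Longrightarrow> G \<subseteq> M"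
  unfolding gens_def by (elim conjE, assumption)+

lemma backward:
  assumes tor: "toric M" and sh: "sharp M" and fa: "face N M"
    and pr: "prime_ideal (gen_ideal (plus_part N) M) M"
    and rkc: "rk (M - gen_ideal (plus_part N) M) + rk N \<le> rk M"
  shows "splits_off N M"
proof -
  let ?I = "gen_ideal (plus_part N) M"
  define K where "K = M - ?I"
  have smM: "submonoid M" and fg: "fin_gen M" and tf: "torsion_free (gp M)"
    using tor toric_def by blast+
  interpret sharpm M using smM sh by unfold_locales
  have smN: "submonoid N" and NM: "N \<subseteq> M" using fa face_def by blast+
  have pp: "plus_part N = N - {0}" using plus_part_eq[OF sh fa] .
  have idl: "ideal ?I M" using pr prime_ideal_def by blast
  have smK: "submonoid K" using pr unfolding prime_ideal_def K_def by blast
  have KM: "K \<subseteq> M" unfolding K_def by blast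
  have faK: "face K M" unfolding face_def
  proof (intro conjI ballI impI smK KM)
    fix x y assume h: "x \<in> M" "y \<in> M" "x + y \<in> K"
    have "x \<notin> ?I"
    proof
      assume "x \<in> ?I" then have "x + y \<in> ?I" using idl h unfolding ideal_def by blast
      then show False using h K_def by blast
    qed
    moreover have "y \<notin> ?I"
    proof
      assume "y \<in> ?I" then have "y + x \<in> ?I" using idl h unfolding ideal_def by blast
      then show False using h K_def by (simp add: add.commute)
    qed
    ultimately show "x \<in> K" "y \<in> K" using h K_def by blast+
  qed
  obtain G where G: "gens G M" "0 \<notin> G" "\<forall>G'. gens G' M \<longrightarrow> card G \<le> card G'"
    using min_gens[OF fg] by blast
  have fG: "finite G" and GM: "G \<subseteq> M" using gensD[OF G(1)] by simp_all
  have GNK: "G - N \<subseteq> K"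
  proof
    fix g assume g: "g \<in> G - N"
    show "g \<in> K"
    proof (rule ccontr)
      assume "g \<notin> K"
      then have "g \<in> ?I" using g GM K_def by blast
      then obtain s m where sm: "g = s + m" "s \<in> N" "s \<noteq> 0" "m \<in> M"
        unfolding gen_ideal_def pp by blast
      have gG: "g \<in> G" using g by blast
      have sM: "s \<in> M" using sm(2) NM by blast
      have "s = 0 \<or> m = 0" using atom[OF G(1) _ G(2) gG sM sm(4) sm(1)] G(3) by blast
      then have "g = s" using sm by simp
      then show False using g sm by simp
    qed
  qed
  have surj: "M \<subseteq> (\<lambda>(n, k). n + k) ` (N \<times> K)"
  proof
    fix m assume "m \<in> M"
    then obtain c where m: "m = (\<Sum>g\<in>G. nmul (c g) g)" using G(1) unfolding gens_def by blast
    have "m = (\<Sum>g\<in>G \<inter> N. nmul (c g) g) + (\<Sum>g\<in>G - N. nmul (c g) g)"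
      unfolding m using fG by (rule sum.Int_Diff)
    moreover have "(\<Sum>g\<in>G \<inter> N. nmul (c g) g) \<in> N"
      by (rule submonoid_sum[OF smN], rule submonoid_nmul[OF smN]) auto
    moreover have "(\<Sum>g\<in>G - N. nmul (c g) g) \<in> K"
      by (rule submonoid_sum[OF smK], rule submonoid_nmul[OF smK]) (use GNK in auto)
    ultimately show "m \<in> (\<lambda>(n, k). n + k) ` (N \<times> K)"
      by (intro image_eqI[of _ _ "((\<Sum>g\<in>G \<inter> N. nmul (c g) g), (\<Sum>g\<in>G - N. nmul (c g) g))"]) simp_all
  qed
  have img: "(\<lambda>(n, k). n + k) ` (N \<times> K) = M"
  proof
    show "(\<lambda>(n, k). n + k) ` (N \<times> K) \<subseteq> M" using NM KM smM unfolding submonoid_def by auto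
  qed (rule surj)
  obtain G' where G': "finite G'" "gp M \<subseteq> rspan G'" using fin_gen_rspan[OF fg] by blast
  have decomp: "gp M \<subseteq> {a + b | a b. a \<in> gp N \<and> b \<in> gp K}"
  proof
    fix y assume "y \<in> gp M"
    then obtain m1 m2 where y: "y = m1 - m2" "m1 \<in> M" "m2 \<in> M" unfolding gp_def by blast
    obtain n1 k1 where 1: "m1 = n1 + k1" "n1 \<in> N" "k1 \<in> K" using y(2) surj by auto
    obtain n2 k2 where 2: "m2 = n2 + k2" "n2 \<in> N" "k2 \<in> K" using y(3) surj by auto
    have "y = (n1 - n2) + (k1 - k2)" using y 1 2 by (simp add: algebra_simps)
    moreover have "n1 - n2 \<in> gp N" "k1 - k2 \<in> gp K" unfolding gp_def using 1 2 by blast+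
    ultimately show "y \<in> {a + b | a b. a \<in> gp N \<and> b \<in> gp K}" by blast
  qed
  have inj: "inj_on (\<lambda>(n, k). n + k) (N \<times> K)"
  proof (rule inj_onI)
    fix p q assume p: "p \<in> N \<times> K" and q: "q \<in> N \<times> K" and e: "(\<lambda>(n, k). n + k) p = (\<lambda>(n, k). n + k) q"
    obtain n k where pk: "p = (n, k)" "n \<in> N" "k \<in> K" using p by blast
    obtain n' k' where qk: "q = (n', k')" "n' \<in> N" "k' \<in> K" using q by blast
    have e': "n + k = n' + k'" using e pk qk by simp
    define x where "x = n - n'"
    have xN: "x \<in> gp N" unfolding x_def gp_def using pk qk by blast
    have "x = k' - k" unfolding x_def using e' by (simp add: algebra_simps)
    then have xK: "x \<in> gp K" unfolding gp_def using pk qk by blast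
    have "x = 0"
    proof (rule ccontr)
      assume "x \<noteq> 0"
      then have "rk M < rk N + rk K"
        using rk_strict[OF G' smN smK NM KM decomp xN xK _ tf] by blast
      then show False using rkc K_def by simp
    qed
    then have "n = n'" "k = k'" using e' x_def by simp_all
    then show "p = q" using pk qk by simp
  qed
  have "bij_betw (\<lambda>(n, k). n + k) (N \<times> K) M" unfolding bij_betw_def using inj img by blast
  then show ?thesis unfolding splits_off_def using faK by blast
qed

theorem lemma2p1:
  fixes M N :: "'a::ab_group_add set"
  assumes "toric M" and "sharp M" and "face N M"
  shows "(splits_off N M
          \<longleftrightarrow> (prime_ideal (gen_ideal (plus_part N) M) M \<and>
               height (gen_ideal (plus_part N) M) M \<ge> int (rk N)))
       \<and> (splits_off N M
          \<longleftrightarrow> (prime_ideal (gen_ideal (plus_part N) M) M \<and>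
               rk (M - gen_ideal (plus_part N) M) + rk N \<le> rk M))"
proof -
  have ht: "height (gen_ideal (plus_part N) M) M \<ge> int (rk N) \<longleftrightarrow>
      rk (M - gen_ideal (plus_part N) M) + rk N \<le> rk M"
    unfolding height_def by linarith
  have "splits_off N M \<longleftrightarrow> (prime_ideal (gen_ideal (plus_part N) M) M \<and>
               rk (M - gen_ideal (plus_part N) M) + rk N \<le> rk M)"
    using forward[OF assms] backward[OF assms] by blast
  then show ?thesis using ht by blast
qed


end
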